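(* Let $\Omega\subset\mathbb{R}^n$ be an open bounded connected domain, let $\rho_\Omega=\max_{\overline\Omega}d_{\partial\Omega}$, and fix $x_0\in\Omega$ with $d_{\partial\Omega}(x_0)=\rho_\Omega$. Then the function $$v(x)=c_0\left[\rho_\Omega^{4/3}-|x-x_0|^{4/3}\right],\qquad c_0=\frac{3^{4/3}}{4},\quad x\in\Omega,$$ (that is, $v(x)=g(\rho_\Omega-|x-x_0|)$ with $g(t)=c_0[\rho_\Omega^{4/3}-(\rho_\Omega-t)^{4/3}]$) is a viscosity solution of $-\Delta_\infty v=1$ in $\Omega$.
   Context: $d_{\partial\Omega}(x)=\min_{y\in\partial\Omega}|x-y|$. $\Delta_\infty\varphi=\langle D^2\varphi\,\nabla\varphi,\nabla\varphi\rangle$. A function $v\in C^0(\Omega)$ is a viscosity solution of $-\Delta_\infty v=1$ if: whenever $\varphi\in C^2(\Omega)$ and $\varphi-v$ has a local minimum at $y$, then $-\Delta_\infty\varphi(y)\le1$; and whenever $\varphi\in C^2(\Omega)$ and $\varphi-v$ has a local maximum at $y$, then $-\Delta_\infty\varphi(y)\ge1$. *)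

theory Defs
  imports "HOL-Analysis.Analysis"
begin

definition dist_bd :: "'a::euclidean_space set \<Rightarrow> 'a \<Rightarrow> real" where
  "dist_bd \<Omega> x = infdist x (frontier \<Omega>)"

definition C2_with :: "'a::euclidean_space set \<Rightarrow> ('a \<Rightarrow> real) \<Rightarrow> ('a \<Rightarrow> 'a) \<Rightarrow> ('a \<Rightarrow> 'a \<Rightarrow> 'a) \<Rightarrow> bool" where
  "C2_with S phi gr H \<longleftrightarrow>
     (\<forall>x\<in>S. (phi has_derivative (\<lambda>h. gr x \<bullet> h)) (at x)) \<and>
     (\<forall>x\<in>S. (gr has_derivative H x) (at x)) \<and>
     (\<forall>h. continuous_on S (\<lambda>x. H x h))"

definition inf_laplacian :: "('a::euclidean_space \<Rightarrow> 'a) \<Rightarrow> ('a \<Rightarrow> 'a \<Rightarrow> 'a) \<Rightarrow> 'a \<Rightarrow> real" where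
  "inf_laplacian gr H y = H y (gr y) \<bullet> gr y"

definition local_min_on :: "'a::metric_space set \<Rightarrow> ('a \<Rightarrow> real) \<Rightarrow> 'a \<Rightarrow> bool" where
  "local_min_on S f y \<longleftrightarrow> (\<exists>e>0. \<forall>x\<in>S \<inter> ball y e. f y \<le> f x)"

definition local_max_on :: "'a::metric_space set \<Rightarrow> ('a \<Rightarrow> real) \<Rightarrow> 'a \<Rightarrow> bool" where
  "local_max_on S f y \<longleftrightarrow> (\<exists>e>0. \<forall>x\<in>S \<inter> ball y e. f x \<le> f y)"

definition visc_sol_inf_lap_1 :: "'a::euclidean_space set \<Rightarrow> ('a \<Rightarrow> real) \<Rightarrow> bool" where
  "visc_sol_inf_lap_1 \<Omega> v \<longleftrightarrow>
     continuous_on \<Omega> v \<and>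
     (\<forall>phi gr H y. C2_with \<Omega> phi gr H \<and> y \<in> \<Omega> \<and> local_min_on \<Omega> (\<lambda>x. phi x - v x) y
        \<longrightarrow> - inf_laplacian gr H y \<le> 1) \<and>
     (\<forall>phi gr H y. C2_with \<Omega> phi gr H \<and> y \<in> \<Omega> \<and> local_max_on \<Omega> (\<lambda>x. phi x - v x) y
        \<longrightarrow> - inf_laplacian gr H y \<ge> 1)"

end

theory Submission imports Defs begin

lemma lemA:
  fixes f f' :: "real \<Rightarrow> real"
  assumes d: "d > 0"
    and D: "\<And>t. \<bar>t\<bar> < d \<Longrightarrow> (f has_real_derivative f' t) (at t)"
    and D2: "(f' has_real_derivative a) (at 0)"
    and mn: "\<And>t. \<bar>t\<bar> < d \<Longrightarrow> f 0 \<le> f t"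
  shows "a \<ge> 0"
proof (rule ccontr)
  assume "\<not> a \<ge> 0" hence a: "a < 0" by simp
  have f0: "f' 0 = 0"
    by (rule DERIV_local_min[OF D[of 0] d]) (use d mn in auto)
  obtain d' where d': "d' > 0" and lt: "\<And>h. h > 0 \<Longrightarrow> h < d' \<Longrightarrow> f' (0 + h) < f' 0"
    using DERIV_neg_dec_right[OF D2 a] by blast
  define e where "e = min d d' / 2"
  have e: "0 < e" "e < d" "e < d'" using d d' by (auto simp: e_def)
  have "\<And>x. 0 \<le> x \<Longrightarrow> x \<le> e \<Longrightarrow> (f has_real_derivative f' x) (at x)"
    using e by (intro D) auto
  from MVT2[OF e(1) this] obtain z where z: "0 < z" "z < e" "f e - f 0 = (e - 0) * f' z" by blast
  have "f' z < 0" using lt[of z] z e f0 by simp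
  hence "f e - f 0 < 0" using z e by (simp add: mult_pos_neg)
  moreover have "f 0 \<le> f e" using mn[of e] e by simp
  ultimately show False by simp
qed

lemma lemB:
  fixes g g' :: "real \<Rightarrow> real"
  assumes d: "d > 0" and c: "c > 0"
    and D: "\<And>t. \<bar>t\<bar> < d \<Longrightarrow> (g has_real_derivative g' t) (at t)"
    and D2: "(g' has_real_derivative a) (at 0)"
    and g0: "g' 0 = 0"
    and le: "\<And>t. \<bar>t\<bar> < d \<Longrightarrow> g t - g 0 \<le> - c * \<bar>t\<bar> powr (4/3)"
  shows False
proof -
  define M where "M = \<bar>a\<bar> + 1"
  have M: "M > 0" by (simp add: M_def)
  have "((\<lambda>t. g' t + M * t) has_real_derivative a + M) (at 0)"
    by (auto intro!: derivative_eq_intros D2)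
  moreover have "a + M > 0" by (simp add: M_def)
  ultimately obtain d' where d': "d' > 0" and gt: "\<And>h. h > 0 \<Longrightarrow> h < d' \<Longrightarrow> g' (0 + h) + M * (0 + h) > g' 0 + M * 0"
    using DERIV_pos_inc_right by blast
  define t where "t = min (min d d' / 2) ((c / M) powr (3/2))"
  have t: "0 < t" "t < d" "t < d'" "t \<le> (c / M) powr (3/2)" using d d' c M
    by (auto simp: t_def)
  have "\<And>x. 0 \<le> x \<Longrightarrow> x \<le> t \<Longrightarrow> (g has_real_derivative g' x) (at x)"
    using t by (intro D) auto
  from MVT2[OF t(1) this] obtain z where z: "0 < z" "z < t" "g t - g 0 = (t - 0) * g' z" by blast
  have "g' z > - M * z" using gt[of z] z t g0 by simp
  hence "t * g' z > t * (- M * z)" using z t by (intro mult_strict_left_mono) auto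
  moreover have "t * (- M * z) \<ge> - M * t * t" using z t M by (simp add: mult_left_mono)
  ultimately have "g t - g 0 > - M * t * t" using z by (simp add: algebra_simps)
  moreover have "g t - g 0 \<le> - c * t powr (4/3)" using le[of t] t by simp
  ultimately have A: "c * t powr (4/3) < M * t * t" by simp
  define s where "s = t powr (2/3)"
  have s: "s > 0" using t by (simp add: s_def)
  have "t powr (4/3) = s * s" unfolding s_def by (simp add: powr_add[symmetric])
  moreover have "t * t = s * s * s"
  proof -
    have "s * s * s = t powr (2/3 + 2/3 + 2/3)" unfolding s_def by (simp only: powr_add)
    also have "\<dots> = t powr 2" by simp
    also have "\<dots> = t * t" using t by (simp add: powr_numeral power2_eq_square)
    finally show ?thesis by simp
  qed
  ultimately have "c * (s * s) < M * (s * s * s)" using A by (simp add: mult.assoc)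
  hence "c < M * s" using s by (simp add: mult.commute mult.left_commute)
  moreover have "s \<le> c / M"
  proof -
    have "s \<le> ((c / M) powr (3/2)) powr (2/3)" unfolding s_def
      using t by (intro powr_mono2) auto
    also have "\<dots> = c / M" using c M by (simp add: powr_powr)
    finally show ?thesis .
  qed
  hence "M * s \<le> c" using M by (simp add: field_simps)
  ultimately show False by simp
qed


lemma lineD1:
  assumes "C2_with \<Omega> \<phi> gr H" "y + t *\<^sub>R p \<in> \<Omega>"
  shows "((\<lambda>t. \<phi> (y + t *\<^sub>R p)) has_real_derivative gr (y + t *\<^sub>R p) \<bullet> p) (at t)"
proof -
  have d: "(\<phi> has_derivative (\<lambda>h. gr (y + t *\<^sub>R p) \<bullet> h)) (at (y + t *\<^sub>R p))"
    using assms unfolding C2_with_def by blast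
  have l: "((\<lambda>t. y + t *\<^sub>R p) has_derivative (\<lambda>s. s *\<^sub>R p)) (at t)"
    by (auto intro!: derivative_eq_intros)
  have "((\<lambda>t. \<phi> (y + t *\<^sub>R p)) has_derivative (\<lambda>s. gr (y + t *\<^sub>R p) \<bullet> (s *\<^sub>R p))) (at t)"
    using has_derivative_compose[OF l d] by simp
  then show ?thesis unfolding has_field_derivative_def
    by (rule has_derivative_eq_rhs) (auto simp: fun_eq_iff)
qed

lemma lineD2:
  assumes "C2_with \<Omega> \<phi> gr H" "y \<in> \<Omega>"
  shows "((\<lambda>t. gr (y + t *\<^sub>R p) \<bullet> p) has_real_derivative H y p \<bullet> p) (at 0)"
proof -
  have d: "(gr has_derivative H y) (at (y + 0 *\<^sub>R p))"
    using assms unfolding C2_with_def by simp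
  have lin: "linear (H y)" using d has_derivative_linear by blast
  have l: "((\<lambda>t. y + t *\<^sub>R p) has_derivative (\<lambda>s. s *\<^sub>R p)) (at 0)"
    by (auto intro!: derivative_eq_intros)
  have "((\<lambda>t. gr (y + t *\<^sub>R p)) has_derivative (\<lambda>s. H y (s *\<^sub>R p))) (at 0)"
    using has_derivative_compose[OF l d] by simp
  then have "((\<lambda>t. gr (y + t *\<^sub>R p) \<bullet> p) has_derivative (\<lambda>s. H y (s *\<^sub>R p) \<bullet> p)) (at 0)"
    by (auto intro!: derivative_eq_intros)
  then show ?thesis unfolding has_field_derivative_def
    by (rule has_derivative_eq_rhs) (auto simp: fun_eq_iff linear_scale[OF lin])
qed

lemma npow_deriv0:
  fixes x0 :: "'a::euclidean_space"
  shows "((\<lambda>x. norm (x - x0) powr (4/3)) has_derivative (\<lambda>h. 0)) (at x0)"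
  unfolding has_derivative_within_alt
proof (intro conjI allI impI)
  show "bounded_linear (\<lambda>h::'a. 0::real)" by simp
  fix e :: real assume e: "e > 0"
  show "\<exists>d>0. \<forall>y\<in>UNIV. norm (y - x0) < d \<longrightarrow>
      norm (norm (y - x0) powr (4 / 3) - norm (x0 - x0) powr (4 / 3) - 0) \<le> e * norm (y - x0)"
  proof (intro exI[of _ "e ^ 3"] conjI ballI impI)
    show "e^3 > 0" using e by simp
    fix y assume y: "norm (y - x0) < e ^ 3"
    define n where "n = norm (y - x0)"
    have n: "n \<ge> 0" "n < e^3" using y by (auto simp: n_def)
    show "norm (norm (y - x0) powr (4 / 3) - norm (x0 - x0) powr (4 / 3) - 0) \<le> e * norm (y - x0)"
    proof (cases "n = 0")
      case True then show ?thesis by (simp add: n_def)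
    next
      case False
      hence np: "n > 0" using n by simp
      have "n powr (4/3) = n powr (1 + 1/3)" by simp
      also have "\<dots> = n * n powr (1/3)" using np by (simp only: powr_add powr_one)
      finally have A: "n powr (4/3) = n * n powr (1/3)" .
      have "n powr (1/3) \<le> (e^3) powr (1/3)" using n by (intro powr_mono2) auto
      moreover have "(e^3) powr (1/3) = e"
      proof -
        have "e powr 3 = e ^ 3" using e by (intro powr_numeral) simp
        hence "(e^3) powr (1/3) = (e powr 3) powr (1/3)" by simp
        also have "\<dots> = e powr (3 * (1/3))" by (rule powr_powr)
        also have "\<dots> = e" using e by simp
        finally show ?thesis .
      qed
      ultimately have "n powr (4/3) \<le> e * n" using np A
        by (simp add: mult.commute mult_right_mono)
      then show ?thesis by (simp add: n_def[symmetric])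
    qed
  qed
qed

lemma aux_alg: "(n::real) > 0 \<Longrightarrow> i / n * (4/3 * (n * q)) = 4/3 * q * i"
  by (simp add: field_simps)

lemma npow_deriv:
  fixes x0 y :: "'a::euclidean_space"
  assumes "y \<noteq> x0"
  shows "((\<lambda>x. norm (x - x0) powr (4/3)) has_derivative
           (\<lambda>h. (4/3) * norm (y - x0) powr (-2/3) * ((y - x0) \<bullet> h))) (at y)"
proof -
  have nz: "y - x0 \<noteq> 0" using assms by simp
  define n where "n = norm (y - x0)"
  have np: "n > 0" using nz by (simp add: n_def)
  have d1: "((\<lambda>x. x - x0) has_derivative (\<lambda>h. h)) (at y)"
    by (auto intro!: derivative_eq_intros)
  have d2: "((\<lambda>x. norm (x - x0)) has_derivative (\<lambda>h. h \<bullet> sgn (y - x0))) (at y)"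
    using has_derivative_compose[OF d1, of norm "\<lambda>h. h \<bullet> sgn (y - x0)"] has_derivative_norm[OF nz] by simp
  have d3: "((\<lambda>z. z powr (4/3)) has_real_derivative (4/3) * n powr (4/3 - 1)) (at (norm (y - x0)))"
    using has_real_derivative_powr[OF np, of "4/3"] unfolding n_def .
  have DD: "((\<lambda>x. norm (x - x0) powr (4/3)) has_derivative (\<lambda>h. h \<bullet> sgn (y - x0) * ((4/3) * n powr (4/3 - 1)))) (at y)"
    using DERIV_compose_FDERIV[OF d3 d2] by simp
  have "n powr (4/3 - 1) = n * n powr (-2/3)"
  proof -
    have "n powr (4/3 - 1) = n powr (1 + (-2/3))" by simp
    also have "\<dots> = n * n powr (-2/3)" using np by (simp only: powr_add powr_one)
    finally show ?thesis .
  qed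
  have EQ: "(\<lambda>h. h \<bullet> sgn (y - x0) * ((4/3) * n powr (4/3 - 1))) = (\<lambda>h. (4/3) * norm (y - x0) powr (-2/3) * ((y - x0) \<bullet> h))"
  proof (rule ext)
    fix h
    have "sgn (y - x0) = (1 / n) *\<^sub>R (y - x0)"
      unfolding sgn_div_norm n_def by (simp add: divide_inverse)
    hence "h \<bullet> sgn (y - x0) = (1 / n) * (h \<bullet> (y - x0))" by simp
    also have "\<dots> = ((y - x0) \<bullet> h) / n" by (simp add: inner_commute)
    finally have A: "h \<bullet> sgn (y - x0) = ((y - x0) \<bullet> h) / n" .
    have B: "n powr (4/3 - 1) = n * n powr (-2/3)" by fact
    show "h \<bullet> sgn (y - x0) * ((4/3) * n powr (4/3 - 1)) = (4/3) * norm (y - x0) powr (-2/3) * ((y - x0) \<bullet> h)"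
      unfolding A B n_def[symmetric] by (rule aux_alg[OF np])
  qed
  show ?thesis using DD unfolding EQ .
qed


lemma c0_facts:
  assumes "c0 = 3 powr (4/3) / (4::real)"
  shows "c0 > 0" "c0 ^ 3 = 81 / 64"
proof -
  show "c0 > 0" by (subst assms) simp
  have "(3 powr (4/3) :: real) ^ 3 = 3 powr (4/3 * 3)"
    by (simp add: powr_realpow[symmetric] powr_powr)
  also have "\<dots> = 81" by simp
  finally show "c0 ^ 3 = 81 / 64" by (subst assms) (simp add: power_divide)
qed

lemma ball_min:
  fixes f :: "'a::metric_space \<Rightarrow> real"
  assumes "open \<Omega>" "y \<in> \<Omega>" "local_min_on \<Omega> f y"
  shows "\<exists>e>0. ball y e \<subseteq> \<Omega> \<and> (\<forall>x\<in>ball y e. f y \<le> f x)"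
proof -
  obtain e1 where e1: "e1 > 0" "\<forall>x\<in>\<Omega> \<inter> ball y e1. f y \<le> f x"
    using assms(3) unfolding local_min_on_def by blast
  obtain e2 where e2: "e2 > 0" "ball y e2 \<subseteq> \<Omega>"
    using assms(1,2) open_contains_ball by blast
  show ?thesis using e1 e2
    by (intro exI[of _ "min e1 e2"]) auto
qed

lemma ball_max:
  fixes f :: "'a::metric_space \<Rightarrow> real"
  assumes "open \<Omega>" "y \<in> \<Omega>" "local_max_on \<Omega> f y"
  shows "\<exists>e>0. ball y e \<subseteq> \<Omega> \<and> (\<forall>x\<in>ball y e. f x \<le> f y)"
proof -
  obtain e1 where e1: "e1 > 0" "\<forall>x\<in>\<Omega> \<inter> ball y e1. f x \<le> f y"
    using assms(3) unfolding local_max_on_def by blast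
  obtain e2 where e2: "e2 > 0" "ball y e2 \<subseteq> \<Omega>"
    using assms(1,2) open_contains_ball by blast
  show ?thesis using e1 e2
    by (intro exI[of _ "min e1 e2"]) auto
qed

lemma ev_ball:
  fixes y :: "'a::metric_space"
  assumes "e > 0" "\<forall>x\<in>ball y e. P x"
  shows "eventually P (at y)"
  unfolding eventually_at using assms by (auto simp: dist_commute intro!: exI[of _ e])

lemma grad_eq:
  fixes f :: "'a::euclidean_space \<Rightarrow> real"
  assumes "(f has_derivative (\<lambda>h. q \<bullet> h)) (at y)"
    and "(\<lambda>h. q \<bullet> h) = (\<lambda>h. 0)"
  shows "q = 0"
  using fun_cong[OF assms(2), of q] by simp

lemma v_grad:
  fixes x0 y :: "'a::euclidean_space"
  assumes "y \<noteq> x0"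
  shows "((\<lambda>x. c0 * (R - norm (x - x0) powr (4/3))) has_derivative
     (\<lambda>h. (- (c0 * (4/3) * norm (y - x0) powr (-2/3)) *\<^sub>R (y - x0)) \<bullet> h)) (at y)"
proof -
  have "((\<lambda>x. c0 * (R - norm (x - x0) powr (4/3))) has_derivative
     (\<lambda>h. c0 * (0 - (4/3) * norm (y - x0) powr (-2/3) * ((y - x0) \<bullet> h)))) (at y)"
    by (intro has_derivative_mult_right has_derivative_diff has_derivative_const npow_deriv assms)
  then show ?thesis by (rule has_derivative_eq_rhs) (auto simp: fun_eq_iff)
qed

lemma v_grad0:
  fixes x0 :: "'a::euclidean_space"
  shows "((\<lambda>x. c0 * (R - norm (x - x0) powr (4/3))) has_derivative (\<lambda>h. 0 \<bullet> h)) (at x0)"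
proof -
  have "((\<lambda>x. c0 * (R - norm (x - x0) powr (4/3))) has_derivative (\<lambda>h. c0 * (0 - 0))) (at x0)"
    by (intro has_derivative_mult_right has_derivative_diff has_derivative_const npow_deriv0)
  then show ?thesis by simp
qed

lemma grad_from_ext:
  fixes \<phi> v :: "'a::euclidean_space \<Rightarrow> real"
  assumes C: "C2_with \<Omega> \<phi> gr H" and y: "y \<in> \<Omega>"
    and Dv: "(v has_derivative (\<lambda>h. q \<bullet> h)) (at y)"
    and ext: "eventually (\<lambda>x. \<phi> y - v y \<le> \<phi> x - v x) (at y) \<or> eventually (\<lambda>x. \<phi> x - v x \<le> \<phi> y - v y) (at y)"
  shows "gr y = q"
proof -
  have Dp: "(\<phi> has_derivative (\<lambda>h. gr y \<bullet> h)) (at y)" using C y unfolding C2_with_def by blast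
  have D: "((\<lambda>x. \<phi> x - v x) has_derivative (\<lambda>h. (gr y - q) \<bullet> h)) (at y)"
    using has_derivative_diff[OF Dp Dv] by (simp add: inner_diff_left)
  have "(\<lambda>h. (gr y - q) \<bullet> h) = (\<lambda>h. 0)"
    using ext has_derivative_local_min[OF D] has_derivative_local_max[OF D] by blast
  then show ?thesis using fun_cong[of _ _ "gr y - q"] by (metis inner_eq_zero_iff right_minus_eq)
qed


lemma line_v:
  fixes x0 y :: "'a::euclidean_space"
  assumes "k * t < 1"
  shows "c0 * (R - norm (y + t *\<^sub>R (- k *\<^sub>R (y - x0)) - x0) powr (4/3))
       = c0 * (R - norm (y - x0) powr (4/3) * (1 - k * t) powr (4/3))"
proof -
  have "y + t *\<^sub>R (- k *\<^sub>R (y - x0)) - x0 = (1 - k * t) *\<^sub>R (y - x0)"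
    by (simp add: algebra_simps)
  hence "norm (y + t *\<^sub>R (- k *\<^sub>R (y - x0)) - x0) = (1 - k * t) * norm (y - x0)"
    using assms by simp
  hence "norm (y + t *\<^sub>R (- k *\<^sub>R (y - x0)) - x0) powr (4/3) = (1 - k * t) powr (4/3) * norm (y - x0) powr (4/3)"
    using assms by (simp add: powr_mult)
  then show ?thesis by (simp add: mult.commute)
qed

lemma w_d1:
  fixes k t rr c0 R :: real
  assumes "k * t < 1"
  shows "((\<lambda>t. c0 * (R - rr * (1 - k * t) powr (4/3))) has_real_derivative
           c0 * rr * (4/3) * k * (1 - k * t) powr (1/3)) (at t)"
proof -
  have g: "((\<lambda>t. 1 - k * t) has_real_derivative - k) (at t)"
    by (auto intro!: derivative_eq_intros)
  have "((\<lambda>t. (1 - k * t) powr (4/3)) has_real_derivative (4/3) * (1 - k * t) powr (4/3 - of_nat 1) * (- k)) (at t)"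
    by (rule DERIV_fun_powr[OF g]) (use assms in simp)
  hence "((\<lambda>t. c0 * (R - rr * (1 - k * t) powr (4/3))) has_real_derivative
           c0 * (0 - rr * ((4/3) * (1 - k * t) powr (4/3 - of_nat 1) * (- k)))) (at t)"
    by (intro DERIV_cmult DERIV_diff DERIV_const)
  then show ?thesis
    by (rule DERIV_cong) (simp add: algebra_simps)
qed

lemma w_d2:
  fixes k rr c0 :: real
  shows "((\<lambda>t. c0 * rr * (4/3) * k * (1 - k * t) powr (1/3)) has_real_derivative
           - (c0 * rr * (4/9) * k^2)) (at 0)"
proof -
  have g: "((\<lambda>t. 1 - k * t) has_real_derivative - k) (at 0)"
    by (auto intro!: derivative_eq_intros)
  have "((\<lambda>t. (1 - k * t) powr (1/3)) has_real_derivative (1/3) * (1 - k * 0) powr (1/3 - of_nat 1) * (- k)) (at 0)"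
    by (rule DERIV_fun_powr[OF g]) simp
  hence "((\<lambda>t. c0 * rr * (4/3) * k * (1 - k * t) powr (1/3)) has_real_derivative
           c0 * rr * (4/3) * k * ((1/3) * (1 - k * 0) powr (1/3 - of_nat 1) * (- k))) (at 0)"
    by (intro DERIV_cmult)
  then show ?thesis
    by (rule DERIV_cong) (simp add: power2_eq_square)
qed

lemma ident:
  fixes c0 r :: real
  assumes "c0 ^ 3 = 81 / 64" "r > 0"
  shows "c0 * r powr (4/3) * (4/9) * (c0 * (4/3) * r powr (-2/3))^2 = 1"
proof -
  have "r powr (4/3) * r powr (-2/3) * r powr (-2/3) = r powr (4/3 + -2/3 + -2/3)"
    by (simp only: powr_add)
  also have "\<dots> = 1" using assms(2) by simp
  finally have A: "r powr (4/3) * r powr (-2/3) * r powr (-2/3) = 1" .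
  have "c0 * r powr (4/3) * (4/9) * (c0 * (4/3) * r powr (-2/3))^2
      = (64/81) * c0^3 * (r powr (4/3) * r powr (-2/3) * r powr (-2/3))"
    by (simp add: power2_eq_square power3_eq_cube)
  also have "\<dots> = 1" using A assms(1) by simp
  finally show ?thesis .
qed


lemma main_ext:
  fixes \<Omega> :: "'a::euclidean_space set" and x0 y :: 'a
  assumes op: "open \<Omega>" and c0: "c0 = 3 powr (4/3) / 4"
    and C: "C2_with \<Omega> \<phi> gr H" and y: "y \<in> \<Omega>"
    and ext: "(local_min_on \<Omega> (\<lambda>x. \<phi> x - c0 * (R - norm (x - x0) powr (4/3))) y \<and> \<sigma> = (1::real))
            \<or> (local_max_on \<Omega> (\<lambda>x. \<phi> x - c0 * (R - norm (x - x0) powr (4/3))) y \<and> \<sigma> = -1)"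
  shows "\<sigma> * (inf_laplacian gr H y + 1) \<ge> 0"
proof -
  define v where "v = (\<lambda>x. c0 * (R - norm (x - x0) powr (4/3)))"
  define f where "f = (\<lambda>x. \<phi> x - v x)"
  have c0p: "c0 > 0" and c03: "c0 ^ 3 = 81/64" using c0_facts[OF c0] by auto
  obtain e where e: "e > 0" "ball y e \<subseteq> \<Omega>"
    and ee: "\<forall>x\<in>ball y e. \<sigma> * f y \<le> \<sigma> * f x"
  proof -
    { assume m: "local_min_on \<Omega> f y" "\<sigma> = 1"
      from ball_min[OF op y m(1)] obtain e where "e > 0 \<and> ball y e \<subseteq> \<Omega> \<and> (\<forall>x\<in>ball y e. f y \<le> f x)" by blast
      hence ?thesis using that m(2) by auto }
    moreover
    { assume m: "local_max_on \<Omega> f y" "\<sigma> = -1"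
      from ball_max[OF op y m(1)] obtain e where "e > 0 \<and> ball y e \<subseteq> \<Omega> \<and> (\<forall>x\<in>ball y e. f x \<le> f y)" by blast
      hence ?thesis using that m(2) by auto }
    ultimately show ?thesis using ext unfolding f_def v_def by blast
  qed
  have sig: "\<sigma> = 1 \<or> \<sigma> = -1" using ext by blast
  have evext: "eventually (\<lambda>x. \<phi> y - v y \<le> \<phi> x - v x) (at y) \<or> eventually (\<lambda>x. \<phi> x - v x \<le> \<phi> y - v y) (at y)"
  proof (cases "\<sigma> = 1")
    case True
    have "\<forall>x\<in>ball y e. \<phi> y - v y \<le> \<phi> x - v x" using ee True unfolding f_def by simp
    then show ?thesis using ev_ball[OF e(1)] by blast
  next
    case False
    hence "\<sigma> = -1" using sig by simp
    have "\<forall>x\<in>ball y e. \<phi> x - v x \<le> \<phi> y - v y"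
    proof
      fix x assume "x \<in> ball y e"
      hence "\<sigma> * f y \<le> \<sigma> * f x" using ee by blast
      then show "\<phi> x - v x \<le> \<phi> y - v y" using \<open>\<sigma> = -1\<close> unfolding f_def by simp
    qed
    then show ?thesis using ev_ball[OF e(1)] by blast
  qed
  show ?thesis
  proof (cases "y = x0")
    case False
    define r where "r = norm (y - x0)"
    have rp: "r > 0" using False by (simp add: r_def)
    define k where "k = c0 * (4/3) * r powr (-2/3)"
    have kp: "k > 0" using c0p rp by (simp add: k_def)
    define p where "p = - k *\<^sub>R (y - x0)"
    have gy: "gr y = p"
      using grad_from_ext[OF C y _ evext] v_grad[OF False, of c0 R] unfolding v_def p_def k_def r_def by simp
    define rr where "rr = r powr (4/3)"
    define \<delta> where "\<delta> = min (e / (norm p + 1)) (1 / k)"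
    have dp: "\<delta> > 0" using e kp by (simp add: \<delta>_def add_nonneg_pos)
    have inb: "y + t *\<^sub>R p \<in> ball y e" if "\<bar>t\<bar> < \<delta>" for t
    proof -
      have np1: "norm p + 1 > 0" by (simp add: add_nonneg_pos)
      have "\<bar>t\<bar> < e / (norm p + 1)" using that by (simp add: \<delta>_def)
      hence "\<bar>t\<bar> * (norm p + 1) < e" using np1 by (simp add: pos_less_divide_eq)
      hence "\<bar>t\<bar> * norm p < e" by (smt (verit) abs_ge_zero mult_nonneg_nonneg distrib_left mult.commute)
      then show ?thesis by (simp add: dist_norm)
    qed
    have kt: "k * t < 1" if "\<bar>t\<bar> < \<delta>" for t
    proof -
      have "\<bar>t\<bar> < 1 / k" using that by (simp add: \<delta>_def)
      hence "k * \<bar>t\<bar> < 1" using kp by (simp add: field_simps)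
      moreover have "k * t \<le> k * \<bar>t\<bar>" using kp by (intro mult_left_mono) auto
      ultimately show ?thesis by linarith
    qed
    define F where "F = (\<lambda>t. \<phi> (y + t *\<^sub>R p) - c0 * (R - rr * (1 - k * t) powr (4/3)))"
    define F' where "F' = (\<lambda>t. gr (y + t *\<^sub>R p) \<bullet> p - c0 * rr * (4/3) * k * (1 - k * t) powr (1/3))"
    have Ff: "F t = f (y + t *\<^sub>R p)" if "\<bar>t\<bar> < \<delta>" for t
    proof -
      have "c0 * (R - norm (y + t *\<^sub>R p - x0) powr (4/3)) = c0 * (R - rr * (1 - k * t) powr (4/3))"
        using line_v[OF kt[OF that], of c0 R y x0] unfolding p_def rr_def r_def .
      then show ?thesis unfolding F_def f_def v_def by (simp only: )
    qed
    have F0: "F 0 = f y" using Ff[of 0] dp by simp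
    have DF: "(F has_real_derivative F' t) (at t)" if "\<bar>t\<bar> < \<delta>" for t
      unfolding F_def F'_def
      by (intro DERIV_diff lineD1[OF C] w_d1 kt that) (use inb[OF that] e in auto)
    have DF2: "(F' has_real_derivative (H y p \<bullet> p - - (c0 * rr * (4/9) * k^2))) (at 0)"
      unfolding F'_def by (intro DERIV_diff lineD2[OF C y] w_d2)
    have id1: "c0 * rr * (4/9) * k^2 = 1" unfolding rr_def k_def by (rule ident[OF c03 rp])
    have "\<sigma> * (H y p \<bullet> p - - (c0 * rr * (4/9) * k^2)) \<ge> 0"
    proof (rule lemA[OF dp])
      show "((\<lambda>t. \<sigma> * F t) has_real_derivative \<sigma> * F' t) (at t)" if "\<bar>t\<bar> < \<delta>" for t
        using DF[OF that] by (intro DERIV_cmult)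
      show "((\<lambda>t. \<sigma> * F' t) has_real_derivative \<sigma> * (H y p \<bullet> p - - (c0 * rr * (4/9) * k^2))) (at 0)"
        using DF2 by (intro DERIV_cmult)
      show "\<sigma> * F 0 \<le> \<sigma> * F t" if "\<bar>t\<bar> < \<delta>" for t
        using ee inb[OF that] Ff[OF that] F0 by simp
    qed
    then show ?thesis using id1 gy unfolding inf_laplacian_def by simp
  next
    case True
    have gy: "gr y = 0"
      using grad_from_ext[OF C y _ evext] v_grad0[of c0 R x0] True unfolding v_def by simp
    show ?thesis
    proof (cases "\<sigma> = 1")
      case True then show ?thesis using gy unfolding inf_laplacian_def by simp
    next
      case False
      hence s: "\<sigma> = -1" using sig by simp
      obtain u :: 'a where u: "u \<in> Basis" using nonempty_Basis by blast
      have nu: "norm u = 1" using u by simp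
      define G where "G = (\<lambda>t. \<phi> (y + t *\<^sub>R u))"
      define G' where "G' = (\<lambda>t. gr (y + t *\<^sub>R u) \<bullet> u)"
      have inb: "y + t *\<^sub>R u \<in> ball y e" if "\<bar>t\<bar> < e" for t
        using that nu by (simp add: dist_norm)
      have "False"
      proof (rule lemB[OF e(1) c0p])
        show "(G has_real_derivative G' t) (at t)" if "\<bar>t\<bar> < e" for t
          unfolding G_def G'_def by (rule lineD1[OF C]) (use inb[OF that] e in auto)
        show "(G' has_real_derivative H y u \<bullet> u) (at 0)"
          unfolding G'_def by (rule lineD2[OF C y])
        show "G' 0 = 0" unfolding G'_def using gy by simp
        show "G t - G 0 \<le> - c0 * \<bar>t\<bar> powr (4/3)" if "\<bar>t\<bar> < e" for t
        proof -
          have "f (y + t *\<^sub>R u) \<le> f y" using ee inb[OF that] s by simp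
          moreover have "v (y + t *\<^sub>R u) = c0 * (R - \<bar>t\<bar> powr (4/3))" "v y = c0 * R"
            unfolding v_def using True nu by auto
          ultimately show ?thesis unfolding f_def G_def by (simp add: algebra_simps)
        qed
      qed
      then show ?thesis by simp
    qed
  qed
qed


lemma v_cont:
  fixes x0 :: "'a::euclidean_space"
  shows "continuous_on \<Omega> (\<lambda>x. c0 * (R - norm (x - x0) powr (4/3)))"
proof (rule continuous_at_imp_continuous_on, rule ballI)
  fix y assume "y \<in> \<Omega>"
  show "isCont (\<lambda>x. c0 * (R - norm (x - x0) powr (4/3))) y"
  proof (cases "y = x0")
    case True
    show ?thesis using has_derivative_continuous[OF v_grad0[of c0 R x0]] True by simp
  next
    case False
    show ?thesis using has_derivative_continuous[OF v_grad[OF False, of c0 R]] .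
  qed
qed

theorem lemma4:
  fixes \<Omega> :: "'a::euclidean_space set" and x0 :: 'a and \<rho> c0 :: real
  assumes "open \<Omega>" and "bounded \<Omega>" and "connected \<Omega>"
    and "\<rho> = (SUP x\<in>closure \<Omega>. dist_bd \<Omega> x)"
    and "x0 \<in> \<Omega>" and "dist_bd \<Omega> x0 = \<rho>"
    and "c0 = 3 powr (4/3) / 4"
  shows "visc_sol_inf_lap_1 \<Omega> (\<lambda>x. c0 * (\<rho> powr (4/3) - norm (x - x0) powr (4/3)))"
  unfolding visc_sol_inf_lap_1_def
proof (intro conjI allI impI)
  show "continuous_on \<Omega> (\<lambda>x. c0 * (\<rho> powr (4/3) - norm (x - x0) powr (4/3)))" by (rule v_cont)
next
  fix \<phi> gr H y
  assume a: "C2_with \<Omega> \<phi> gr H \<and> y \<in> \<Omega> \<and> local_min_on \<Omega> (\<lambda>x. \<phi> x - c0 * (\<rho> powr (4/3) - norm (x - x0) powr (4/3))) y"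
  have "1 * (inf_laplacian gr H y + 1) \<ge> 0"
    using a by (intro main_ext[OF assms(1) assms(7), of \<phi> gr H y]) auto
  then show "- inf_laplacian gr H y \<le> 1" by simp
next
  fix \<phi> gr H y
  assume a: "C2_with \<Omega> \<phi> gr H \<and> y \<in> \<Omega> \<and> local_max_on \<Omega> (\<lambda>x. \<phi> x - c0 * (\<rho> powr (4/3) - norm (x - x0) powr (4/3))) y"
  have "(-1) * (inf_laplacian gr H y + 1) \<ge> 0"
    using a by (intro main_ext[OF assms(1) assms(7), of \<phi> gr H y]) auto
  then show "- inf_laplacian gr H y \<ge> 1" by simp
qed

end
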